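(* Let $\mathbf v,\mathbf o\in\mathbb{R}^n$, $\mathbf u\in\mathbb{R}^n\setminus\{0\}$, $d\in\mathbb{R}$ and $r>0$, and consider the problem $$f^*=\min_{\mathbf w\in\mathbb{R}^n}\mathbf v^T\mathbf w\quad\text{s.t.}\quad\mathbf u^T\mathbf w\le d,\ \ \|\mathbf w-\mathbf o\|\le r,$$ assumed feasible in the sense that $\frac{|\mathbf u^T\mathbf o-d|}{\|\mathbf u\|}\le r$. Let $d'=d-\mathbf u^T\mathbf o$. Then: 1. If $\mathbf v^T\mathbf u+\frac{\|\mathbf v\|d'}{r}\ge0$, then $f^*=\mathbf v^T\mathbf o-r\|\mathbf v\|$. 2. Otherwise, $$f^*=\mathbf v^T\mathbf o-\|\mathbf v^\perp\|\sqrt{r^2-\frac{(d')^2}{\|\mathbf u\|^2}}+\frac{\mathbf v^T\mathbf u\,d'}{\|\mathbf u\|^2},$$ where $\mathbf v^\perp=\mathbf v-\frac{\mathbf v^T\mathbf u}{\|\mathbf u\|^2}\mathbf u$.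
   Context: $\|\cdot\|$ denotes the Euclidean norm. *)

theory Defs
  imports "HOL-Analysis.Analysis"
begin

definition feas_set :: "'a::euclidean_space \<Rightarrow> real \<Rightarrow> 'a \<Rightarrow> real \<Rightarrow> 'a set" where
  "feas_set u d c r = {w. u \<bullet> w \<le> d \<and> norm (w - c) \<le> r}"

definition is_min_value :: "'a::euclidean_space \<Rightarrow> 'a set \<Rightarrow> real \<Rightarrow> bool" where
  "is_min_value v S f \<longleftrightarrow> (\<exists>w\<in>S. v \<bullet> w = f) \<and> (\<forall>w\<in>S. f \<le> v \<bullet> w)"

end

theory Submission
  imports Defs
begin

lemma real_key:
  fixes a m d r S b N :: real
  assumes "N > 0" "r > 0" "b \<ge> 0" "S \<ge> 0" "m \<ge> 0"
    and c: "a * r + m * d < 0"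
    and hS: "S^2 * N = r^2 * N - d^2" and hb: "b^2 * N = m^2 * N - a^2"
  shows "a * S \<le> - (b * d)"
proof (cases "d \<ge> 0")
  case True
  have "m * d \<ge> 0" using True assms by simp
  hence a0: "a * r < 0" using c by linarith
  hence "a < 0" using assms(2) by (simp add: mult_less_0_iff)
  have "m*d \<le> -(a*r)" using c by simp
  hence "(m*d)^2 \<le> (-(a*r))^2" using \<open>m*d\<ge>0\<close> by (rule power_mono)
  hence "(m*d)^2 \<le> (a*r)^2" by simp
  hence "m^2*d^2 \<le> a^2*r^2" by (simp add: power_mult_distrib)
  hence "(b*d)^2 * N \<le> (a*S)^2 * N"
  proof -
    assume h: "m^2*d^2 \<le> a^2*r^2"
    have "(b*d)^2 * N = (b^2*N)*d^2" by (simp add: power_mult_distrib)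
    also have "\<dots> = N*(m^2*d^2) - a^2*d^2" unfolding hb by (simp add: algebra_simps)
    also have "\<dots> \<le> N*(a^2*r^2) - a^2*d^2" using h assms(1) by simp
    also have "\<dots> = a^2*(S^2*N)" unfolding hS by (simp add: algebra_simps)
    also have "\<dots> = (a*S)^2 * N" by (simp add: power_mult_distrib)
    finally show ?thesis .
  qed
  hence "(b*d)^2 \<le> (a*S)^2" using assms(1) by simp
  hence "(b*d)^2 \<le> (-(a*S))^2" by simp
  hence "b*d \<le> -(a*S)" by (rule power2_le_imp_le) (use \<open>a<0\<close> assms(4) in \<open>simp add: mult_nonpos_nonneg\<close>)
  thus ?thesis by simp
next
  case False
  show ?thesis
  proof (cases "a \<le> 0")
    case True
    have "a * S \<le> 0" using True assms(4) by (simp add: mult_nonpos_nonneg)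
    moreover have "b * d \<le> 0" using False assms(3) by (simp add: mult_nonneg_nonpos)
    ultimately show ?thesis by linarith
  next
    case a: False
    have "0 \<le> a * r" using a assms(2) by simp
    have "a*r \<le> m*(-d)" using c by simp
    hence "(a*r)^2 \<le> (m*(-d))^2" using \<open>0 \<le> a*r\<close> by (rule power_mono)
    hence "a^2*r^2 \<le> m^2*d^2" by (simp add: power_mult_distrib)
    hence "(a*S)^2 * N \<le> (b*d)^2 * N"
    proof -
      assume h: "a^2*r^2 \<le> m^2*d^2"
      have "(a*S)^2 * N = a^2*(S^2*N)" by (simp add: power_mult_distrib)
      also have "\<dots> = N*(a^2*r^2) - a^2*d^2" unfolding hS by (simp add: algebra_simps)
      also have "\<dots> \<le> N*(m^2*d^2) - a^2*d^2" using h assms(1) by simp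
      also have "\<dots> = (b^2*N)*d^2" unfolding hb by (simp add: algebra_simps)
      also have "\<dots> = (b*d)^2 * N" by (simp add: power_mult_distrib)
      finally show ?thesis .
    qed
    hence "(a*S)^2 \<le> (-(b*d))^2" using assms(1) by simp
    thus ?thesis by (rule power2_le_imp_le) (use False assms(3) in \<open>simp add: mult_nonneg_nonpos\<close>)
  qed
qed
lemma real_key2:
  fixes a b d r S N t q :: real
  assumes N0: "N > 0" and S0: "S > 0" and b0: "b > 0" and td: "t \<le> d"
    and px: "(d/N)*t - (S/b)*q \<le> r^2" and hS: "S^2 * N = r^2 * N - d^2"
    and k: "a * S \<le> - (b * d)"
  shows "- (b * S) + a * d / N \<le> (a/N) * t + q"
proof -
  have e1: "(a*S)*(t-d) \<ge> (-(b*d))*(t-d)" using k td by (intro mult_right_mono_neg) auto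
  have "((d/N)*t - (S/b)*q) * (N*b) \<le> r^2 * (N*b)" using px N0 b0 by (intro mult_right_mono) auto
  hence e2: "d*t*b - S*q*N \<le> r^2*N*b" using N0 b0 by (simp add: algebra_simps)
  have "S*N*((a/N)*t + q - (-(b*S) + a*d/N)) = (a*S)*(t-d) + S*N*q + b*(S^2*N)"
    using N0 by (simp add: field_simps power2_eq_square)
  also have "\<dots> = (a*S)*(t-d) + S*N*q + b*(r^2 * N - d^2)" using hS by simp
  also have "\<dots> \<ge> (-(b*d))*(t-d) + S*N*q + b*(r^2 * N - d^2)" using e1 by linarith
  finally have "S*N*((a/N)*t + q - (-(b*S) + a*d/N)) \<ge> (-(b*d))*(t-d) + S*N*q + b*(r^2 * N - d^2)" .
  moreover have "(-(b*d))*(t-d) + S*N*q + b*(r^2 * N - d^2) = r^2*N*b - (d*t*b - S*q*N)"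
    by (simp add: algebra_simps power2_eq_square)
  ultimately have "S*N*((a/N)*t + q - (-(b*S) + a*d/N)) \<ge> 0" using e2 by linarith
  hence "(a/N)*t + q - (-(b*S) + a*d/N) \<ge> 0" using S0 N0 by (metis mult_pos_pos zero_le_mult_iff not_le)
  thus ?thesis by simp
qed
lemma core:
  fixes v u :: "'a::euclidean_space" and d r :: real
  assumes u0: "u \<noteq> 0" and r0: "r > 0" and fe: "\<bar>d\<bar> \<le> r * norm u"
  defines "S0 \<equiv> {x. u \<bullet> x \<le> d \<and> norm x \<le> r}"
  shows "(v \<bullet> u + norm v * d / r \<ge> 0 \<longrightarrow> is_min_value v S0 (- (r * norm v)))
       \<and> (\<not> (v \<bullet> u + norm v * d / r \<ge> 0) \<longrightarrow>
            is_min_value v S0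
              (- (norm (v - ((v \<bullet> u) / (norm u)\<^sup>2) *\<^sub>R u) * sqrt (r\<^sup>2 - d\<^sup>2 / (norm u)\<^sup>2))
               + (v \<bullet> u) * d / (norm u)\<^sup>2))"
proof -
  define N where "N = (norm u)^2"
  define a where "a = v \<bullet> u"
  define m where "m = norm v"
  define w where "w = v - (a / N) *\<^sub>R u"
  define b where "b = norm w"
  define S where "S = sqrt (r^2 - d^2 / N)"
  have nu: "norm u > 0" using u0 by simp
  have N0: "N > 0" using nu unfolding N_def by simp
  have uu: "u \<bullet> u = N" unfolding N_def by (simp add: power2_norm_eq_inner)
  have wu: "w \<bullet> u = 0" unfolding w_def a_def using uu N0 by (simp add: inner_diff_left)
  have vdec: "\<And>x. v \<bullet> x = (a/N) * (u \<bullet> x) + w \<bullet> x"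
    unfolding w_def by (simp add: inner_diff_left)
  have wv: "w \<bullet> v = b^2"
  proof -
    have "w \<bullet> v = w \<bullet> w + (a/N) * (w \<bullet> u)" unfolding w_def
      by (simp add: inner_diff_left inner_diff_right inner_commute algebra_simps)
    thus ?thesis using wu unfolding b_def by (simp add: power2_norm_eq_inner)
  qed
  have hb: "b^2 * N = m^2 * N - a^2"
  proof -
    have "w \<bullet> v = norm v ^ 2 - a^2/N" unfolding w_def a_def
      by (simp add: inner_diff_left inner_diff_right inner_commute dot_square_norm power2_eq_square)
    hence "b^2 = m^2 - a^2/N" using wv unfolding m_def by simp
    thus ?thesis using N0 by (simp add: field_simps)
  qed
  have d2: "d^2 \<le> r^2 * N"
  proof -
    have "\<bar>d\<bar>^2 \<le> (r * norm u)^2" using fe by (intro power_mono) auto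
    thus ?thesis unfolding N_def by (simp add: power_mult_distrib)
  qed
  have "d^2 / N \<le> r^2" using d2 by (simp add: pos_divide_le_eq[OF N0])
  hence rad: "r^2 - d^2 / N \<ge> 0" by simp
  have S2: "S^2 = r^2 - d^2/N" unfolding S_def using rad by simp
  have Snn: "S \<ge> 0" unfolding S_def by (rule real_sqrt_ge_zero[OF rad])
  have hS: "S^2 * N = r^2 * N - d^2" using S2 N0 by (simp add: field_simps)
  have am: "\<bar>a\<bar> \<le> m * norm u" unfolding a_def m_def by (rule Cauchy_Schwarz_ineq2)
  have m0: "m \<ge> 0" unfolding m_def by simp
  have b0: "b \<ge> 0" unfolding b_def by simp
  have dlow: "- (r * norm u) \<le> d" using fe by linarith

  have main: "(a + m * d / r \<ge> 0 \<longrightarrow> is_min_value v S0 (- (r * m)))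
       \<and> (\<not> (a + m * d / r \<ge> 0) \<longrightarrow> is_min_value v S0 (- (b * S) + a * d / N))"
  proof (intro conjI impI)
    assume c1: "a + m * d / r \<ge> 0"
    have lb: "\<forall>x\<in>S0. - (r * m) \<le> v \<bullet> x"
    proof
      fix x assume "x \<in> S0"
      hence nx: "norm x \<le> r" unfolding S0_def by simp
      have "\<bar>v \<bullet> x\<bar> \<le> m * norm x" unfolding m_def by (rule Cauchy_Schwarz_ineq2)
      also have "\<dots> \<le> m * r" using nx m0 by (rule mult_left_mono)
      finally show "- (r * m) \<le> v \<bullet> x" by (simp add: mult.commute)
    qed
    have ex: "\<exists>x\<in>S0. v \<bullet> x = - (r * m)"
    proof (cases "v = 0")
      case True
      let ?x = "(- (r / norm u)) *\<^sub>R u"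
      have "u \<bullet> ?x = - (r * norm u)" using nu by (simp add: dot_square_norm power2_eq_square)
      moreover have "norm ?x = r" using nu r0 by simp
      ultimately have "?x \<in> S0" unfolding S0_def using dlow by simp
      moreover have "v \<bullet> ?x = - (r * m)" using True unfolding m_def by simp
      ultimately show ?thesis by blast
    next
      case False
      hence mp: "m > 0" unfolding m_def by simp
      let ?x = "(- (r / m)) *\<^sub>R v"
      have "a * r + m * d \<ge> 0" using c1 r0 by (simp add: field_simps)
      hence "- (r / m) * a \<le> d" using mp by (simp add: field_simps)
      hence "u \<bullet> ?x \<le> d" unfolding a_def by (simp add: inner_commute)
      moreover have "norm ?x = r" using mp r0 unfolding m_def by simp
      ultimately have "?x \<in> S0" unfolding S0_def by simp
      moreover have "v \<bullet> ?x = - (r * m)" using mp unfolding m_def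
        by (simp add: dot_square_norm power2_eq_square)
      ultimately show ?thesis by blast
    qed
    show "is_min_value v S0 (- (r * m))" unfolding is_min_value_def using ex lb by auto
  next
    assume c2: "\<not> (a + m * d / r \<ge> 0)"
    have c: "a * r + m * d < 0" using c2 r0 by (simp add: field_simps)
    have k: "a * S \<le> - (b * d)" by (rule real_key[OF N0 r0 b0 Snn m0 c hS hb])
    define p where "p = (d / N) *\<^sub>R u - (S / b) *\<^sub>R w"
    have up: "u \<bullet> p = d" unfolding p_def using uu wu N0 by (simp add: inner_diff_right inner_commute)
    have vp: "v \<bullet> p = - (b * S) + a * d / N"
    proof -
      have "v \<bullet> p = (d/N) * a - (S/b) * b^2" unfolding p_def a_def using wv
        by (simp add: inner_diff_right inner_commute)
      moreover have "(S/b) * b^2 = b * S" by (cases "b = 0") (simp_all add: power2_eq_square)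
      ultimately show ?thesis by simp
    qed
    have np2: "(norm p)^2 \<le> r^2"
    proof -
      have "(norm p)^2 = p \<bullet> p" by (simp add: dot_square_norm)
      also have "\<dots> = (d/N)*(d/N)*(u \<bullet> u) - (d/N)*(S/b)*(u \<bullet> w) - (S/b)*(d/N)*(w \<bullet> u) + (S/b)*(S/b)*(w \<bullet> w)"
        unfolding p_def by (simp add: inner_diff_right inner_diff_left algebra_simps)
      also have "\<dots> = (d/N)^2 * (u \<bullet> u) + (S/b)^2 * (w \<bullet> w)" using wu
        by (simp add: inner_commute power2_eq_square)
      also have "\<dots> = (d/N)^2 * N + (S/b)^2 * b^2" using uu unfolding b_def by (simp add: dot_square_norm)
      also have "\<dots> \<le> d^2/N + S^2"
      proof -
        have "(S/b)^2 * b^2 \<le> S^2" by (cases "b = 0") (simp_all add: power_divide)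
        moreover have "(d/N)^2 * N = d^2/N" using N0 by (simp add: power2_eq_square)
        ultimately show ?thesis by simp
      qed
      also have "\<dots> = r^2" using S2 by simp
      finally show ?thesis .
    qed
    have np: "norm p \<le> r" using r0 by (intro power2_le_imp_le[OF np2]) simp
    have ex: "\<exists>x\<in>S0. v \<bullet> x = - (b * S) + a * d / N"
      using up np vp unfolding S0_def by blast
    have lb: "\<forall>x\<in>S0. - (b * S) + a * d / N \<le> v \<bullet> x"
    proof
      fix x assume "x \<in> S0"
      hence ux: "u \<bullet> x \<le> d" and nx: "norm x \<le> r" unfolding S0_def by auto
      show "- (b * S) + a * d / N \<le> v \<bullet> x"
      proof (cases "b = 0")
        case True
        hence w0: "w = 0" unfolding b_def by simp
        have "m^2 * N = a^2" using hb True by simp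
        hence "(m * norm u)^2 = \<bar>a\<bar>^2" unfolding N_def by (simp add: power_mult_distrib)
        hence mu: "m * norm u = \<bar>a\<bar>" using m0 by (metis power2_eq_iff_nonneg abs_ge_zero zero_le_mult_iff norm_ge_zero)
        have an: "a < 0"
        proof (rule ccontr)
          assume "\<not> a < 0"
          hence "m * norm u = a" using mu by simp
          hence "a * r + m * d = m * (r * norm u + d)" by (simp add: algebra_simps)
          also have "\<dots> \<ge> 0" using m0 dlow by simp
          finally show False using c by simp
        qed
        have "(a/N) * d \<le> (a/N) * (u \<bullet> x)"
          using ux an N0 by (intro mult_left_mono_neg) (auto simp: divide_nonpos_pos)
        thus ?thesis using vdec[of x] w0 True by simp
      next
        case False
        hence bp: "b > 0" using b0 by simp
        show ?thesis
        proof (cases "S = 0")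
          case True
          hence dd: "d^2 = (r * norm u)^2" using hS unfolding N_def by (simp add: power_mult_distrib)
          have dneg: "d = - (r * norm u)"
          proof (rule ccontr)
            assume "d \<noteq> - (r * norm u)"
            hence "d = r * norm u" using dd by (auto simp: power2_eq_iff)
            hence "a * r + m * d = r * (a + m * norm u)" by (simp add: algebra_simps)
            also have "\<dots> \<ge> 0" using am r0 by simp
            finally show False using c by simp
          qed
          have "\<bar>u \<bullet> x\<bar> \<le> norm u * norm x" by (rule Cauchy_Schwarz_ineq2)
          also have "\<dots> \<le> norm u * r" using nx by (simp add: mult_left_mono)
          finally have "u \<bullet> x = d" using ux dneg by (simp add: mult.commute abs_le_iff)
          have "(norm (x - (d/N) *\<^sub>R u))^2 = (norm x)^2 - 2*(d/N)*(u \<bullet> x) + (d/N)^2 * N"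
          proof -
            have "(norm (x - (d/N) *\<^sub>R u))^2 = (x - (d/N) *\<^sub>R u) \<bullet> (x - (d/N) *\<^sub>R u)" by (simp add: dot_square_norm)
            also have "\<dots> = x \<bullet> x - (d/N)*(x \<bullet> u) - (d/N)*(u \<bullet> x) + (d/N)*(d/N)*(u \<bullet> u)"
              by (simp add: inner_diff_left inner_diff_right algebra_simps)
            also have "\<dots> = (norm x)^2 - 2*(d/N)*(u \<bullet> x) + (d/N)^2 * N"
              using uu by (simp add: inner_commute dot_square_norm power2_eq_square)
            finally show ?thesis .
          qed
          also have "\<dots> = (norm x)^2 - r^2" 
            using \<open>u \<bullet> x = d\<close> hS True N0 by (simp add: power2_eq_square field_simps)
          also have "\<dots> \<le> 0" using nx by (simp add: abs_le_square_iff[symmetric] power_mono)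
          finally have "x = (d/N) *\<^sub>R u" by simp
          hence "v \<bullet> x = a * d / N" unfolding a_def by (simp add: inner_commute)
          thus ?thesis using True by simp
        next
          case False
          hence Sp: "S > 0" using Snn by simp
          have "p \<bullet> x \<le> norm p * norm x" by (rule real_inner_class.Cauchy_Schwarz_ineq2[THEN abs_le_D1])
          also have "\<dots> \<le> r * r" using np nx r0 by (intro mult_mono) auto
          finally have "p \<bullet> x \<le> r^2" by (simp add: power2_eq_square)
          hence px: "(d/N)*(u \<bullet> x) - (S/b)*(w \<bullet> x) \<le> r^2" unfolding p_def by (simp add: inner_diff_left)
          have "- (b * S) + a * d / N \<le> (a/N) * (u \<bullet> x) + w \<bullet> x"
            by (rule real_key2[OF N0 Sp bp ux px hS k])
          thus ?thesis using vdec[of x] by simp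
        qed
      qed
    qed
    show "is_min_value v S0 (- (b * S) + a * d / N)" unfolding is_min_value_def using ex lb by auto
  qed
  thus ?thesis unfolding a_def m_def b_def w_def S_def N_def .
qed

lemma shift:
  fixes v u c :: "'a::euclidean_space"
  assumes "is_min_value v {x. u \<bullet> x \<le> d - u \<bullet> c \<and> norm x \<le> r} f"
  shows "is_min_value v (feas_set u d c r) (v \<bullet> c + f)"
proof -
  from assms obtain x where x: "u \<bullet> x \<le> d - u \<bullet> c" "norm x \<le> r" "v \<bullet> x = f"
    and lb: "\<forall>y. u \<bullet> y \<le> d - u \<bullet> c \<and> norm y \<le> r \<longrightarrow> f \<le> v \<bullet> y"
    unfolding is_min_value_def by auto
  have "x + c \<in> feas_set u d c r" using x unfolding feas_set_def by (simp add: inner_add_right)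
  moreover have "v \<bullet> (x + c) = v \<bullet> c + f" using x by (simp add: inner_add_right)
  moreover have "\<forall>w\<in>feas_set u d c r. v \<bullet> c + f \<le> v \<bullet> w"
  proof
    fix w assume "w \<in> feas_set u d c r"
    hence "u \<bullet> (w - c) \<le> d - u \<bullet> c" "norm (w - c) \<le> r" unfolding feas_set_def
      by (auto simp: inner_diff_right)
    hence "f \<le> v \<bullet> (w - c)" using lb by blast
    thus "v \<bullet> c + f \<le> v \<bullet> w" by (simp add: inner_diff_right)
  qed
  ultimately show ?thesis unfolding is_min_value_def by metis
qed

theorem lemma8:
  fixes v c u :: "'a::euclidean_space" and d r :: real
  assumes "u \<noteq> 0" and "r > 0"
    and "\<bar>u \<bullet> c - d\<bar> / norm u \<le> r"
  shows "(v \<bullet> u + norm v * (d - u \<bullet> c) / r \<ge> 0 \<longrightarrow>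
            is_min_value v (feas_set u d c r) (v \<bullet> c - r * norm v))
       \<and> (\<not> (v \<bullet> u + norm v * (d - u \<bullet> c) / r \<ge> 0) \<longrightarrow>
            is_min_value v (feas_set u d c r)
              (v \<bullet> c
               - norm (v - ((v \<bullet> u) / (norm u)\<^sup>2) *\<^sub>R u)
                 * sqrt (r\<^sup>2 - (d - u \<bullet> c)\<^sup>2 / (norm u)\<^sup>2)
               + (v \<bullet> u) * (d - u \<bullet> c) / (norm u)\<^sup>2))"
proof -
  have nu: "norm u > 0" using assms(1) by simp
  have fe: "\<bar>d - u \<bullet> c\<bar> \<le> r * norm u"
    using assms(3) nu by (simp add: pos_divide_le_eq abs_minus_commute)
  note C = core[OF assms(1) assms(2) fe, of v]
  show ?thesis
  proof (intro conjI impI)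
    assume h: "v \<bullet> u + norm v * (d - u \<bullet> c) / r \<ge> 0"
    have "is_min_value v (feas_set u d c r) (v \<bullet> c + - (r * norm v))"
      using C h by (intro shift) simp
    thus "is_min_value v (feas_set u d c r) (v \<bullet> c - r * norm v)" by simp
  next
    assume h: "\<not> (v \<bullet> u + norm v * (d - u \<bullet> c) / r \<ge> 0)"
    have "is_min_value v (feas_set u d c r) (v \<bullet> c + (- (norm (v - ((v \<bullet> u) / (norm u)\<^sup>2) *\<^sub>R u)
                 * sqrt (r\<^sup>2 - (d - u \<bullet> c)\<^sup>2 / (norm u)\<^sup>2))
               + (v \<bullet> u) * (d - u \<bullet> c) / (norm u)\<^sup>2))"
      using C h by (intro shift) blast
    thus "is_min_value v (feas_set u d c r)
              (v \<bullet> c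
               - norm (v - ((v \<bullet> u) / (norm u)\<^sup>2) *\<^sub>R u)
                 * sqrt (r\<^sup>2 - (d - u \<bullet> c)\<^sup>2 / (norm u)\<^sup>2)
               + (v \<bullet> u) * (d - u \<bullet> c) / (norm u)\<^sup>2)" by (simp add: algebra_simps)
  qed
qed

end
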